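(* Let $(R,\mathfrak m)$ be a one-dimensional Cohen–Macaulay local ring admitting a canonical module $\omega_R$ with $R\subseteq\omega_R\subseteq\overline{R}$, let $B=\mathfrak m:\mathfrak m$ with Jacobson radical $J(B)$, and assume $\mathfrak m^2\subseteq R:\omega_R$. Let $I$ be an ideal of $B$ contained in $J(B)$. The following are equivalent: (1) for every minimal system of generators $\{x_1,\dots,x_n\}$ of $\mathfrak m$ for which $R:\omega_R=(x_1,\dots,x_r)^2+(x_{r+1},\dots,x_n)$ (for some $0\le r\le n$), there is no $x\in I$ such that $x_j=x\,x_i$ for some $i,j\in\{1,\dots,r\}$; (2) $I\subseteq (R:\omega_R):\mathfrak m$.
   Context: $Q(R)$ is the total ring of fractions and $\overline R$ the integral closure of $R$ in $Q(R)$; for fractional ideals $I,J$, $I:J=\{r\in Q(R)\mid rJ\subseteq I\}$. *)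

theory Defs
  imports Main
begin

text \<open>Setting: the total ring of fractions Q(R) is the ambient type 'a (all of UNIV);
  R is a subring of it. All colons, integral closure etc. are computed in Q(R).\<close>

definition subring :: "'a::comm_ring_1 set \<Rightarrow> bool" where
  "subring R \<longleftrightarrow> 1 \<in> R \<and> (\<forall>x\<in>R. \<forall>y\<in>R. x + y \<in> R \<and> x * y \<in> R \<and> - x \<in> R)"

definition submod :: "'a::comm_ring_1 set \<Rightarrow> 'a set \<Rightarrow> bool" where
  "submod R M \<longleftrightarrow> 0 \<in> M \<and> (\<forall>x\<in>M. \<forall>y\<in>M. x + y \<in> M) \<and> (\<forall>r\<in>R. \<forall>x\<in>M. r * x \<in> M)"

definition gen :: "'a::comm_ring_1 set \<Rightarrow> 'a set \<Rightarrow> 'a set" where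
  "gen R S = \<Inter>{M. submod R M \<and> S \<subseteq> M}"

definition colon :: "'a::comm_ring_1 set \<Rightarrow> 'a set \<Rightarrow> 'a set" where
  "colon I J = {r. \<forall>y\<in>J. r * y \<in> I}"

definition ideal_prod :: "'a::comm_ring_1 set \<Rightarrow> 'a set \<Rightarrow> 'a set \<Rightarrow> 'a set" where
  "ideal_prod R A B = gen R {a * b | a b. a \<in> A \<and> b \<in> B}"

definition ideal_sum :: "'a::comm_ring_1 set \<Rightarrow> 'a set \<Rightarrow> 'a set \<Rightarrow> 'a set" where
  "ideal_sum R A B = gen R (A \<union> B)"

definition ideal_of :: "'a::comm_ring_1 set \<Rightarrow> 'a set \<Rightarrow> bool" where
  "ideal_of S I \<longleftrightarrow> I \<subseteq> S \<and> submod S I"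

definition maximal_ideal :: "'a::comm_ring_1 set \<Rightarrow> 'a set \<Rightarrow> bool" where
  "maximal_ideal S M \<longleftrightarrow> ideal_of S M \<and> M \<noteq> S \<and>
     (\<forall>N. ideal_of S N \<and> M \<subseteq> N \<longrightarrow> N = M \<or> N = S)"

definition prime_ideal :: "'a::comm_ring_1 set \<Rightarrow> 'a set \<Rightarrow> bool" where
  "prime_ideal S P \<longleftrightarrow> ideal_of S P \<and> P \<noteq> S \<and>
     (\<forall>a\<in>S. \<forall>b\<in>S. a * b \<in> P \<longrightarrow> a \<in> P \<or> b \<in> P)"

definition jacobson :: "'a::comm_ring_1 set \<Rightarrow> 'a set" where
  "jacobson S = \<Inter>{M. maximal_ideal S M}"

definition nonzerodivisor :: "'a::comm_ring_1 set \<Rightarrow> 'a \<Rightarrow> bool" where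
  "nonzerodivisor R s \<longleftrightarrow> s \<in> R \<and> (\<forall>y\<in>R. s * y = 0 \<longrightarrow> y = 0)"

definition total_ring_of_fractions :: "'a::comm_ring_1 set \<Rightarrow> bool" where
  "total_ring_of_fractions R \<longleftrightarrow> subring R \<and>
     (\<forall>s. nonzerodivisor R s \<longrightarrow> (\<exists>t. s * t = 1)) \<and>
     (\<forall>q. \<exists>a\<in>R. \<exists>s. nonzerodivisor R s \<and> s * q = a)"

definition noetherian :: "'a::comm_ring_1 set \<Rightarrow> bool" where
  "noetherian R \<longleftrightarrow> (\<forall>I. ideal_of R I \<longrightarrow> (\<exists>F. finite F \<and> F \<subseteq> I \<and> gen R F = I))"

definition local_ring :: "'a::comm_ring_1 set \<Rightarrow> 'a set \<Rightarrow> bool" where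
  "local_ring R m \<longleftrightarrow> maximal_ideal R m \<and> (\<forall>M. maximal_ideal R M \<longrightarrow> M = m)"

definition dim_ge :: "'a::comm_ring_1 set \<Rightarrow> nat \<Rightarrow> bool" where
  "dim_ge R n \<longleftrightarrow> (\<exists>ps :: 'a set list. length ps = n + 1 \<and>
     (\<forall>i<length ps. prime_ideal R (ps ! i)) \<and>
     (\<forall>i. i + 1 < length ps \<longrightarrow> ps ! i \<subset> ps ! (i + 1)))"

definition regular_seq :: "'a::comm_ring_1 set \<Rightarrow> 'a set \<Rightarrow> 'a list \<Rightarrow> bool" where
  "regular_seq R m xs \<longleftrightarrow> set xs \<subseteq> m \<and> gen R (set xs) \<noteq> R \<and>
     (\<forall>i<length xs. \<forall>y\<in>R. xs ! i * y \<in> gen R (set (take i xs)) \<longrightarrow> y \<in> gen R (set (take i xs)))"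

definition depth_ge :: "'a::comm_ring_1 set \<Rightarrow> 'a set \<Rightarrow> nat \<Rightarrow> bool" where
  "depth_ge R m n \<longleftrightarrow> (\<exists>xs. length xs = n \<and> regular_seq R m xs)"

definition cohen_macaulay_local :: "'a::comm_ring_1 set \<Rightarrow> 'a set \<Rightarrow> bool" where
  "cohen_macaulay_local R m \<longleftrightarrow> noetherian R \<and> local_ring R m \<and>
     (\<forall>n. depth_ge R m n \<longleftrightarrow> dim_ge R n)"

definition krull_dim_one :: "'a::comm_ring_1 set \<Rightarrow> bool" where
  "krull_dim_one R \<longleftrightarrow> dim_ge R 1 \<and> \<not> dim_ge R 2"

definition integral_over :: "'a::comm_ring_1 set \<Rightarrow> 'a \<Rightarrow> bool" where
  "integral_over R x \<longleftrightarrow> (\<exists>p. set p \<subseteq> R \<and>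
     x ^ length p + (\<Sum>i<length p. p ! i * x ^ i) = 0)"

definition int_closure :: "'a::comm_ring_1 set \<Rightarrow> 'a set" where
  "int_closure R = {x. integral_over R x}"

text \<open>fractional ideal: finitely generated R-submodule I of Q(R) with Q(R) I = Q(R)\<close>
definition frac_ideal :: "'a::comm_ring_1 set \<Rightarrow> 'a set \<Rightarrow> bool" where
  "frac_ideal R I \<longleftrightarrow> submod R I \<and> (\<exists>F. finite F \<and> gen R F = I) \<and>
     (\<exists>u\<in>I. \<exists>v. u * v = 1)"

text \<open>canonical (fractional) ideal, via the duality K:(K:I) = I (Herzog-Kunz)\<close>
definition canonical_ideal :: "'a::comm_ring_1 set \<Rightarrow> 'a set \<Rightarrow> bool" where
  "canonical_ideal R K \<longleftrightarrow> frac_ideal R K \<and>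
     (\<forall>I. frac_ideal R I \<longrightarrow> colon K (colon K I) = I)"

definition min_gens :: "'a::comm_ring_1 set \<Rightarrow> 'a set \<Rightarrow> 'a list \<Rightarrow> bool" where
  "min_gens R m xs \<longleftrightarrow> set xs \<subseteq> m \<and> gen R (set xs) = m \<and>
     (\<forall>ys. set ys \<subseteq> m \<and> gen R (set ys) = m \<longrightarrow> length xs \<le> length ys)"

end

theory Submission
  imports Defs
begin


lemma submod_gen: "submod R (gen R S)"
  unfolding gen_def submod_def by auto

lemma gen_sub: "S \<subseteq> gen R S"
  unfolding gen_def by auto

lemma gen_least: "submod R M \<Longrightarrow> S \<subseteq> M \<Longrightarrow> gen R S \<subseteq> M"
  unfolding gen_def by auto

lemma subring_0: "subring R \<Longrightarrow> 0 \<in> R"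
  unfolding subring_def by (metis add.right_inverse)

lemma subring_m1: "subring R \<Longrightarrow> -1 \<in> R"
  unfolding subring_def by auto

lemma submod_diff: "subring R \<Longrightarrow> submod R M \<Longrightarrow> a \<in> M \<Longrightarrow> b \<in> M \<Longrightarrow> a - b \<in> M"
proof -
  assume a: "subring R" "submod R M" "a \<in> M" "b \<in> M"
  have "(-1) * b \<in> M" using a subring_m1 unfolding submod_def by blast
  then have "a + (-1) * b \<in> M" using a unfolding submod_def by blast
  then show ?thesis by simp
qed

lemma submod_sum: "submod R M \<Longrightarrow> (\<And>l. l \<in> A \<Longrightarrow> f l \<in> M) \<Longrightarrow> sum f A \<in> M"
proof (induction A rule: infinite_finite_induct)
  case (infinite A) then show ?case by (simp add: submod_def)
next
  case empty then show ?case by (simp add: submod_def)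
next
  case (insert x F) then show ?case by (simp add: submod_def)
qed

definition lc :: "(nat \<Rightarrow> 'a::comm_ring_1) \<Rightarrow> 'a list \<Rightarrow> 'a" where
  "lc a xs = (\<Sum>l<length xs. a l * xs ! l)"

lemma lc_in: "submod R M \<Longrightarrow> set xs \<subseteq> M \<Longrightarrow> (\<And>l. l < length xs \<Longrightarrow> a l \<in> R) \<Longrightarrow> lc a xs \<in> M"
  unfolding lc_def
  apply (rule submod_sum, assumption)
  by (simp add: submod_def subset_iff)

lemma lc_unit: "p < length xs \<Longrightarrow> lc (\<lambda>l. if l = p then 1 else 0) xs = xs ! p"
proof -
  assume p: "p < length xs"
  have "(\<lambda>l. (if l = p then 1 else 0) * xs ! l) = (\<lambda>l. if l = p then xs ! l else 0)" by auto
  then have "lc (\<lambda>l. if l = p then 1 else 0) xs = (\<Sum>l<length xs. if l = p then xs ! l else 0)"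
    unfolding lc_def by metis
  also have "\<dots> = xs ! p" using p by (subst sum.delta) auto
  finally show ?thesis .
qed

lemma gen_list: "subring R \<Longrightarrow> gen R (set xs) = {lc a xs | a. \<forall>l<length xs. a l \<in> R}"
proof
  assume R: "subring R"
  show "gen R (set xs) \<subseteq> {lc a xs | a. \<forall>l<length xs. a l \<in> R}"
  proof (rule gen_least)
    show "submod R {lc a xs | a. \<forall>l<length xs. a l \<in> R}"
      unfolding submod_def
    proof (intro conjI ballI)
      show "0 \<in> {lc a xs | a. \<forall>l<length xs. a l \<in> R}"
        using subring_0[OF R] by (intro CollectI exI[of _ "\<lambda>_. 0"]) (simp add: lc_def)
    next
      fix x y assume "x \<in> {lc a xs | a. \<forall>l<length xs. a l \<in> R}" "y \<in> {lc a xs | a. \<forall>l<length xs. a l \<in> R}"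
      then obtain a b where "x = lc a xs" "y = lc b xs" "\<forall>l<length xs. a l \<in> R" "\<forall>l<length xs. b l \<in> R" by blast
      then show "x + y \<in> {lc a xs | a. \<forall>l<length xs. a l \<in> R}"
        using R unfolding subring_def
        by (intro CollectI exI[of _ "\<lambda>l. a l + b l"]) (auto simp: lc_def sum.distrib distrib_right)
    next
      fix r x assume "r \<in> R" "x \<in> {lc a xs | a. \<forall>l<length xs. a l \<in> R}"
      then obtain a where "x = lc a xs" "\<forall>l<length xs. a l \<in> R" by blast
      then show "r * x \<in> {lc a xs | a. \<forall>l<length xs. a l \<in> R}"
        using R \<open>r \<in> R\<close> unfolding subring_def
        by (intro CollectI exI[of _ "\<lambda>l. r * a l"]) (auto simp: lc_def sum_distrib_left mult.assoc)
    qed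
    show "set xs \<subseteq> {lc a xs | a. \<forall>l<length xs. a l \<in> R}"
    proof
      fix x assume "x \<in> set xs"
      then obtain p where p: "p < length xs" "xs ! p = x" by (auto simp: in_set_conv_nth)
      show "x \<in> {lc a xs | a. \<forall>l<length xs. a l \<in> R}"
        using R subring_0[OF R] p lc_unit[OF p(1)] unfolding subring_def
        by (intro CollectI exI[of _ "\<lambda>l. if l = p then 1 else 0"]) auto
    qed
  qed
next
  assume R: "subring R"
  show "{lc a xs | a. \<forall>l<length xs. a l \<in> R} \<subseteq> gen R (set xs)"
    using lc_in[OF submod_gen gen_sub] by blast
qed

lemma ideal_has_unit:
  assumes "subring S" "ideal_of S N" "1 \<in> N" shows "N = S"
  using assms unfolding ideal_of_def submod_def by (metis mult.right_neutral subset_antisym subsetI)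

lemma exists_max:
  assumes S: "subring S" and z: "z \<in> S" and nu: "\<forall>u\<in>S. z * u \<noteq> 1"
  shows "\<exists>M. maximal_ideal S M \<and> z \<in> M"
proof -
  define A where "A = {N. ideal_of S N \<and> 1 \<notin> N \<and> z \<in> N}"
  have Sc: "\<And>a b. a \<in> S \<Longrightarrow> b \<in> S \<Longrightarrow> a * b \<in> S \<and> a + b \<in> S" "1 \<in> S"
    using S unfolding subring_def by blast+
  define Z where "Z = {z * s | s. s \<in> S}"
  have Z1: "Z \<subseteq> S" unfolding Z_def using Sc z by blast
  have Zmem: "z * s \<in> Z" if "s \<in> S" for s unfolding Z_def using that by blast
  have Z2: "0 \<in> Z" using Zmem[OF subring_0[OF S]] by simp
  have Z3: "1 \<notin> Z" unfolding Z_def using nu by force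
  have Z4: "z \<in> Z" using Zmem[OF Sc(2)] by simp
  have Z5: "x + y \<in> Z" if a1: "x \<in> Z" "y \<in> Z" for x y
  proof -
    obtain a b where ab: "x = z * a" "y = z * b" "a \<in> S" "b \<in> S" using a1 unfolding Z_def by blast
    have e: "x + y = z * (a + b)" using ab by (simp add: distrib_left)
    have "a + b \<in> S" using Sc ab by blast
    from Zmem[OF this] e show ?thesis by argo
  qed
  have Z6: "r * x \<in> Z" if a1: "r \<in> S" "x \<in> Z" for r x
  proof -
    obtain a where ab: "x = z * a" "a \<in> S" using a1 unfolding Z_def by blast
    have e: "r * x = z * (r * a)" using ab by (simp add: mult.left_commute)
    have "r * a \<in> S" using Sc ab a1 by blast
    from Zmem[OF this] e show ?thesis by argo
  qed
  have zS: "Z \<in> A" unfolding A_def ideal_of_def submod_def using Z1 Z2 Z3 Z4 Z5 Z6 by blast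
  have "\<exists>M\<in>A. \<forall>X\<in>A. M \<subseteq> X \<longrightarrow> X = M"
  proof (rule subset_Zorn_nonempty)
    show "A \<noteq> {}" using zS by blast
  next
    fix C assume C: "C \<noteq> {}" "subset.chain A C"
    then have CA: "C \<subseteq> A" and ch: "\<forall>X\<in>C. \<forall>Y\<in>C. X \<subseteq> Y \<or> Y \<subseteq> X"
      unfolding subset.chain_def by auto
    show "\<Union>C \<in> A"
      unfolding A_def ideal_of_def submod_def
    proof (intro CollectI conjI ballI)
      have AA: "\<And>Z. Z \<in> C \<Longrightarrow> Z \<subseteq> S \<and> submod S Z \<and> 1 \<notin> Z \<and> z \<in> Z"
        using CA unfolding A_def ideal_of_def by blast
      obtain X0 where X0: "X0 \<in> C" using C(1) by blast
      show "\<Union>C \<subseteq> S" using AA by blast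
      show "0 \<in> \<Union>C" using AA[OF X0] X0 unfolding submod_def by blast
      show "1 \<notin> \<Union>C" using AA by blast
      show "z \<in> \<Union>C" using AA[OF X0] X0 by blast
    next
      fix x y assume "x \<in> \<Union>C" "y \<in> \<Union>C"
      then obtain X Y where XY: "X \<in> C" "Y \<in> C" "x \<in> X" "y \<in> Y" by blast
      then have "X \<subseteq> Y \<or> Y \<subseteq> X" using ch by blast
      have sm: "\<And>Z. Z \<in> C \<Longrightarrow> submod S Z" using CA unfolding A_def ideal_of_def by blast
      show "x + y \<in> \<Union>C"
      proof (cases "X \<subseteq> Y")
        case True
        then have "x + y \<in> Y" using sm[OF XY(2)] XY unfolding submod_def by blast
        then show ?thesis using XY by blast
      next
        case False
        then have "Y \<subseteq> X" using \<open>X \<subseteq> Y \<or> Y \<subseteq> X\<close> by blast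
        then have "x + y \<in> X" using sm[OF XY(1)] XY unfolding submod_def by blast
        then show ?thesis using XY by blast
      qed
    next
      fix r x assume "r \<in> S" "x \<in> \<Union>C"
      then obtain X where "X \<in> C" "x \<in> X" by blast
      moreover have "submod S X" using CA \<open>X \<in> C\<close> unfolding A_def ideal_of_def by blast
      ultimately show "r * x \<in> \<Union>C" using \<open>r \<in> S\<close> unfolding submod_def by blast
    qed
  qed
  then obtain M where M: "M \<in> A" "\<forall>X\<in>A. M \<subseteq> X \<longrightarrow> X = M" by blast
  have "maximal_ideal S M"
    unfolding maximal_ideal_def
  proof (intro conjI allI impI)
    show "ideal_of S M" using M unfolding A_def by blast
    show "M \<noteq> S" using M Sc(2) unfolding A_def by blast
  next
    fix N assume N: "ideal_of S N \<and> M \<subseteq> N"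
    show "N = M \<or> N = S"
    proof (cases "1 \<in> N")
      case True then show ?thesis using ideal_has_unit[OF S] N by blast
    next
      case False then have "N \<in> A" using N M unfolding A_def by blast
      then show ?thesis using M N by blast
    qed
  qed
  then show ?thesis using M unfolding A_def by blast
qed


lemma lc_unit': "p < length xs \<Longrightarrow> lc (\<lambda>l. if l = p then v else 0) xs = v * xs ! p"
proof -
  assume p: "p < length xs"
  have "(\<lambda>l. (if l = p then v else 0) * xs ! l) = (\<lambda>l. if l = p then v * xs ! l else 0)" by auto
  then have "lc (\<lambda>l. if l = p then v else 0) xs = (\<Sum>l<length xs. if l = p then v * xs ! l else 0)"
    unfolding lc_def by metis
  also have "\<dots> = v * xs ! p" using p by (subst sum.delta) auto
  finally show ?thesis .
qed

lemma set_take_nth: "l < r \<Longrightarrow> l < length xs \<Longrightarrow> xs ! l \<in> set (take r xs)"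
proof -
  assume a: "l < r" "l < length xs"
  then have "l < length (take r xs)" by simp
  then have "take r xs ! l \<in> set (take r xs)" by (rule nth_mem)
  then show ?thesis using a by simp
qed

lemma set_drop_nth: "r \<le> l \<Longrightarrow> l < length xs \<Longrightarrow> xs ! l \<in> set (drop r xs)"
proof -
  assume a: "r \<le> l" "l < length xs"
  then have "l - r < length (drop r xs)" by simp
  then have "drop r xs ! (l - r) \<in> set (drop r xs)" by (rule nth_mem)
  moreover have "drop r xs ! (l - r) = xs ! l" using a by simp
  ultimately show ?thesis by simp
qed

lemma set_drop_nth_ex: "y \<in> set (drop r xs) \<Longrightarrow> \<exists>l. r \<le> l \<and> l < length xs \<and> y = xs ! l"
proof -
  assume "y \<in> set (drop r xs)"
  then obtain k where k: "k < length (drop r xs)" "drop r xs ! k = y" by (auto simp: in_set_conv_nth)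
  then have "r + k < length xs" "xs ! (r + k) = y" by auto
  then show ?thesis by (intro exI[of _ "r + k"]) auto
qed

lemma set_take_nth_ex: "y \<in> set (take r xs) \<Longrightarrow> \<exists>l. l < r \<and> l < length xs \<and> y = xs ! l"
proof -
  assume "y \<in> set (take r xs)"
  then obtain k where k: "k < length (take r xs)" "take r xs ! k = y" by (auto simp: in_set_conv_nth)
  then have "k < r" "k < length xs" "xs ! k = y" by auto
  then show ?thesis by blast
qed

definition Tset :: "'a::comm_ring_1 set \<Rightarrow> 'a set \<Rightarrow> 'a list \<Rightarrow> nat \<Rightarrow> 'a set" where
  "Tset R m xs r = {lc c xs | c. (\<forall>l<length xs. c l \<in> R) \<and> (\<forall>l<r. c l \<in> m)}"

lemma Tset_submod:
  assumes R: "subring R" and m: "ideal_of R m"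
  shows "submod R (Tset R m xs r)"
  unfolding submod_def
proof (intro conjI ballI)
  have m0: "0 \<in> m" using m unfolding ideal_of_def submod_def by blast
  show "0 \<in> Tset R m xs r" unfolding Tset_def
    using subring_0[OF R] m0 by (intro CollectI exI[of _ "\<lambda>_. 0"]) (simp add: lc_def)
next
  fix x y assume "x \<in> Tset R m xs r" "y \<in> Tset R m xs r"
  then obtain a b where "x = lc a xs" "y = lc b xs" "\<forall>l<length xs. a l \<in> R" "\<forall>l<length xs. b l \<in> R"
    "\<forall>l<r. a l \<in> m" "\<forall>l<r. b l \<in> m"
    unfolding Tset_def by blast
  then show "x + y \<in> Tset R m xs r"
    using R m unfolding subring_def Tset_def ideal_of_def submod_def
    by (intro CollectI exI[of _ "\<lambda>l. a l + b l"]) (auto simp: lc_def sum.distrib distrib_right)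
next
  fix c x assume "c \<in> R" "x \<in> Tset R m xs r"
  then obtain a where "x = lc a xs" "\<forall>l<length xs. a l \<in> R" "\<forall>l<r. a l \<in> m" unfolding Tset_def by blast
  then show "c * x \<in> Tset R m xs r"
    using R m \<open>c \<in> R\<close> unfolding subring_def Tset_def ideal_of_def submod_def
    by (intro CollectI exI[of _ "\<lambda>l. c * a l"]) (auto simp: lc_def sum_distrib_left mult.assoc)
qed

lemma Tset_unit:
  assumes R: "subring R" and m: "ideal_of R m" and l: "l < length xs" and v: "v \<in> R"
    and vm: "l < r \<Longrightarrow> v \<in> m"
  shows "v * xs ! l \<in> Tset R m xs r"
proof -
  have m0: "0 \<in> m" using m unfolding ideal_of_def submod_def by blast
  show ?thesis unfolding Tset_def lc_unit'[OF l, symmetric]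
    using subring_0[OF R] m0 v vm by (intro CollectI exI[of _ "\<lambda>l'. if l' = l then v else 0"]) auto
qed

lemma submod_mult:
  assumes R: "subring R" and M: "submod R M"
  shows "submod R {c. c * y \<in> M}"
  using M unfolding submod_def by (auto simp: distrib_right mult.assoc)

lemma T_eq:
  assumes R: "subring R" and m: "ideal_of R m" and g: "gen R (set xs) = m"
  shows "ideal_sum R (ideal_prod R (gen R (set (take r xs))) (gen R (set (take r xs))))
      (gen R (set (drop r xs))) = Tset R m xs r" (is "?T = _")
proof
  have mR: "m \<subseteq> R" using m unfolding ideal_of_def by blast
  have xsm: "set xs \<subseteq> m" using gen_sub[of "set xs" R] g by simp
  have ms: "submod R m" using m unfolding ideal_of_def by blast
  have TS: "submod R (Tset R m xs r)" by (rule Tset_submod[OF R m])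
  show "?T \<subseteq> Tset R m xs r"
    unfolding ideal_sum_def
  proof (rule gen_least[OF TS], rule Un_least)
    show "gen R (set (drop r xs)) \<subseteq> Tset R m xs r"
    proof (rule gen_least[OF TS], rule subsetI)
      fix y assume y: "y \<in> set (drop r xs)"
      obtain l where l: "r \<le> l" "l < length xs" "y = xs ! l" using set_drop_nth_ex[OF y] by blast
      have "1 * xs ! l \<in> Tset R m xs r" by (rule Tset_unit[OF R m l(2)]) (use R l in \<open>auto simp: subring_def\<close>)
      then show "y \<in> Tset R m xs r" using l by simp
    qed
  next
    show "ideal_prod R (gen R (set (take r xs))) (gen R (set (take r xs))) \<subseteq> Tset R m xs r"
      unfolding ideal_prod_def
    proof (rule gen_least[OF TS], rule subsetI)
      fix z assume "z \<in> {a * b |a b. a \<in> gen R (set (take r xs)) \<and> b \<in> gen R (set (take r xs))}"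
      then obtain a b where z: "z = a * b" "a \<in> gen R (set (take r xs))" "b \<in> gen R (set (take r xs))" by blast
      have tm: "gen R (set (take r xs)) \<subseteq> m"
        using gen_least[OF ms, of "set (take r xs)"] xsm set_take_subset[of r xs] by blast
      have "gen R (set (take r xs)) \<subseteq> {c. \<forall>b\<in>m. c * b \<in> Tset R m xs r}"
      proof (rule gen_least)
        show "submod R {c. \<forall>b\<in>m. c * b \<in> Tset R m xs r}"
          using TS unfolding submod_def by (auto simp: distrib_right mult.assoc)
        show "set (take r xs) \<subseteq> {c. \<forall>b\<in>m. c * b \<in> Tset R m xs r}"
        proof (intro subsetI CollectI ballI)
          fix y b assume y: "y \<in> set (take r xs)" and "b \<in> m"
          obtain l where l: "l < r" "l < length xs" "y = xs ! l" using set_take_nth_ex[OF y] by blast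
          have "b * xs ! l \<in> Tset R m xs r" by (rule Tset_unit[OF R m l(2)]) (use mR \<open>b \<in> m\<close> in auto)
          then show "y * b \<in> Tset R m xs r" using l by (simp add: mult.commute)
        qed
      qed
      then show "z \<in> Tset R m xs r" using z tm by blast
    qed
  qed
next
  have mR: "m \<subseteq> R" using m unfolding ideal_of_def by blast
  have xsm: "set xs \<subseteq> m" using gen_sub[of "set xs" R] g by simp
  have TT: "submod R ?T" unfolding ideal_sum_def by (rule submod_gen)
  have sub: "ideal_prod R (gen R (set (take r xs))) (gen R (set (take r xs))) \<union> gen R (set (drop r xs)) \<subseteq> ?T"
    unfolding ideal_sum_def by (rule gen_sub)
  have dropT: "gen R (set (drop r xs)) \<subseteq> ?T" using sub by blast
  have prodT: "ideal_prod R (gen R (set (take r xs))) (gen R (set (take r xs))) \<subseteq> ?T"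
    using sub by blast
  have gd: "set (drop r xs) \<subseteq> gen R (set (drop r xs))" by (rule gen_sub)
  have gt: "set (take r xs) \<subseteq> gen R (set (take r xs))" by (rule gen_sub)
  show "Tset R m xs r \<subseteq> ?T"
  proof
    fix z assume "z \<in> Tset R m xs r"
    then obtain c where c: "z = lc c xs" "\<forall>l<length xs. c l \<in> R" "\<forall>l<r. c l \<in> m" unfolding Tset_def by blast
    have "(\<Sum>l<length xs. c l * xs ! l) \<in> ?T"
    proof (rule submod_sum[OF TT])
      fix l assume "l \<in> {..<length xs}"
      then have l: "l < length xs" by simp
      show "c l * xs ! l \<in> ?T"
      proof (cases "l < r")
        case False
        then have "xs ! l \<in> set (drop r xs)" using set_drop_nth[of r l xs] l by simp
        then have "xs ! l \<in> ?T" using dropT gd by blast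
        then show ?thesis using TT c l unfolding submod_def by blast
      next
        case True
        have "m \<subseteq> {c. c * xs ! l \<in> ?T}" unfolding g[symmetric]
        proof (rule gen_least[OF submod_mult[OF R TT]], rule subsetI, rule CollectI)
          fix y assume "y \<in> set xs"
          then obtain p where p: "p < length xs" "y = xs ! p" by (auto simp: in_set_conv_nth)
          show "y * xs ! l \<in> ?T"
          proof (cases "p < r")
            case True
            have y1: "y \<in> gen R (set (take r xs))" using set_take_nth[OF True p(1)] p gt by blast
            have y2: "xs ! l \<in> gen R (set (take r xs))" using set_take_nth[OF \<open>l < r\<close> l] gt by blast
            have "y * xs ! l \<in> {a * b |a b. a \<in> gen R (set (take r xs)) \<and> b \<in> gen R (set (take r xs))}"
              using y1 y2 by blast
            then have "y * xs ! l \<in> ideal_prod R (gen R (set (take r xs))) (gen R (set (take r xs)))"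
              unfolding ideal_prod_def by (rule subsetD[OF gen_sub])
            then show ?thesis using prodT by blast
          next
            case False
            then have "y \<in> set (drop r xs)" using set_drop_nth[of r p xs] p by simp
            then have "y \<in> ?T" using dropT gd by blast
            moreover have "xs ! l \<in> R" using nth_mem[OF l] mR xsm by blast
            ultimately have "xs ! l * y \<in> ?T" using TT unfolding submod_def by blast
            then show ?thesis by (simp add: mult.commute)
          qed
        qed
        then show ?thesis using c True by blast
      qed
    qed
    then show "z \<in> ?T" using c unfolding lc_def by simp
  qed
qed


lemma lc_split: "j < length xs \<Longrightarrow> lc a xs = a j * xs ! j + lc (a(j := 0)) xs"
proof -
  assume j: "j < length xs"
  have "lc a xs = a j * xs ! j + (\<Sum>l\<in>{..<length xs} - {j}. a l * xs ! l)"
    unfolding lc_def using j by (subst sum.remove[of _ j]) auto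
  moreover have "lc (a(j := 0)) xs = 0 * xs ! j + (\<Sum>l\<in>{..<length xs} - {j}. (a(j:=0)) l * xs ! l)"
    unfolding lc_def using j by (subst sum.remove[of _ j]) auto
  moreover have "(\<Sum>l\<in>{..<length xs} - {j}. (a(j:=0)) l * xs ! l) = (\<Sum>l\<in>{..<length xs} - {j}. a l * xs ! l)"
    by (rule sum.cong) auto
  ultimately show ?thesis by simp
qed

lemma lc_update_zero: "c j = 0 \<Longrightarrow> lc c (xs[j := v]) = lc c xs"
proof -
  assume c: "c j = 0"
  have e: "c l * xs[j := v] ! l = c l * xs ! l" if "l < length xs" for l
  proof (cases "l = j")
    case True then show ?thesis using c by simp
  next
    case False then show ?thesis by simp
  qed
  show ?thesis unfolding lc_def by (rule sum.cong) (simp_all add: e)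
qed

lemma lc_scale: "lc (\<lambda>l. c * a l) xs = c * lc a xs"
  unfolding lc_def by (simp add: sum_distrib_left mult.assoc)

lemma lc_in_gen: "subring R \<Longrightarrow> (\<And>l. l < length xs \<Longrightarrow> a l \<in> R) \<Longrightarrow> lc a xs \<in> gen R (set xs)"
proof -
  assume R: "subring R" and a: "\<And>l. l < length xs \<Longrightarrow> a l \<in> R"
  have "lc a xs \<in> {lc a xs | a. \<forall>l<length xs. a l \<in> R}" using a by blast
  then show ?thesis using gen_list[OF R, of xs] by simp
qed

lemma exchange:
  assumes R: "subring R" and m: "ideal_of R m" and g: "gen R (set xs) = m" and j: "j < length xs"
    and a: "\<And>l. l < length xs \<Longrightarrow> a l \<in> R" and u: "u \<in> R" "a j * u = 1"
  shows "gen R (set (xs[j := lc a xs])) = m"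
proof
  let ?v = "lc a xs" and ?ys = "xs[j := lc a xs]"
  have mR: "m \<subseteq> R" and ms: "submod R m" using m unfolding ideal_of_def by blast+
  have xsm: "set xs \<subseteq> m" using gen_sub[of "set xs" R] g by simp
  have vm: "?v \<in> m" using lc_in[OF ms xsm] a by blast
  show "gen R (set ?ys) \<subseteq> m"
    using gen_least[OF ms] set_update_subset_insert[of xs j ?v] xsm vm by blast
  show "m \<subseteq> gen R (set ?ys)" unfolding g[symmetric]
  proof (rule gen_least[OF submod_gen], rule subsetI)
    fix y assume "y \<in> set xs"
    then obtain p where p: "p < length xs" "y = xs ! p" by (auto simp: in_set_conv_nth)
    show "y \<in> gen R (set ?ys)"
    proof (cases "p = j")
      case False
      then have "y \<in> set ?ys" using p by (metis length_list_update nth_list_update_neq nth_mem)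
      then show ?thesis using gen_sub[of "set ?ys" R] by blast
    next
      case True
      define b where "b = (\<lambda>l. - (u * a l))(j := u)"
      have bR: "b l \<in> R" if "l < length xs" for l
        using a[OF that] u R unfolding b_def subring_def by auto
      have bj: "b(j := 0) = (\<lambda>l. (- u) * (a(j := 0)) l)" unfolding b_def by auto
      have "lc b ?ys = b j * ?ys ! j + lc (b(j := 0)) ?ys" using lc_split[of j ?ys b] j by simp
      also have "\<dots> = u * ?v + lc (b(j := 0)) xs" using j by (simp add: lc_update_zero b_def)
      also have "\<dots> = u * (a j * xs ! j + lc (a(j := 0)) xs) + (- u) * lc (a(j := 0)) xs"
      proof -
        have e1: "lc (b(j := 0)) xs = (- u) * lc (a(j := 0)) xs" unfolding bj by (rule lc_scale)
        have e2: "?v = a j * xs ! j + lc (a(j := 0)) xs" by (rule lc_split[OF j])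
        show ?thesis by (simp only: e1 e2)
      qed
      also have "\<dots> = (a j * u) * xs ! j" by (simp add: algebra_simps)
      also have "\<dots> = y" using u p True by simp
      finally have "y = lc b ?ys" by simp
      then show ?thesis using lc_in_gen[OF R, of ?ys b] bR by simp
    qed
  qed
qed

lemma one_notin: "subring R \<Longrightarrow> maximal_ideal R m \<Longrightarrow> 1 \<notin> m"
  using ideal_has_unit unfolding maximal_ideal_def by blast

lemma local_unit:
  assumes R: "subring R" and L: "local_ring R m" and a: "a \<in> R" "a \<notin> m"
  shows "\<exists>u\<in>R. a * u = 1"
proof (rule ccontr)
  assume "\<not> (\<exists>u\<in>R. a * u = 1)"
  then obtain M where "maximal_ideal R M" "a \<in> M" using exists_max[OF R a(1)] by blast
  then show False using L a unfolding local_ring_def by blast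
qed

lemma nth_in_remove: "p < length xs \<Longrightarrow> p \<noteq> j \<Longrightarrow> xs ! p \<in> set (take j xs @ drop (Suc j) xs)"
proof -
  assume p: "p < length xs" "p \<noteq> j"
  show ?thesis
  proof (cases "p < j")
    case True then show ?thesis using set_take_nth[OF True p(1)] by simp
  next
    case False then have "Suc j \<le> p" using p(2) by simp
    then show ?thesis using set_drop_nth[OF _ p(1)] by simp
  qed
qed


lemma Tset_sub_K:
  assumes R: "subring R" and m: "ideal_of R m" and K: "submod R K"
    and m2: "\<And>a b. a \<in> m \<Longrightarrow> b \<in> m \<Longrightarrow> a * b \<in> K"
    and d: "set (drop r ys) \<subseteq> K" and ys: "set ys \<subseteq> m"
  shows "Tset R m ys r \<subseteq> K"
proof
  fix z assume "z \<in> Tset R m ys r"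
  then obtain c where c: "z = lc c ys" "\<forall>l<length ys. c l \<in> R" "\<forall>l<r. c l \<in> m" unfolding Tset_def by blast
  have "(\<Sum>l<length ys. c l * ys ! l) \<in> K"
  proof (rule submod_sum[OF K])
    fix l assume "l \<in> {..<length ys}"
    then have l: "l < length ys" by simp
    show "c l * ys ! l \<in> K"
    proof (cases "l < r")
      case True then show ?thesis using m2 c l ys nth_mem[OF l] by blast
    next
      case False
      then have "ys ! l \<in> set (drop r ys)" using set_drop_nth[of r l ys] l by simp
      then have "ys ! l \<in> K" using d by blast
      then show ?thesis using K c l unfolding submod_def by blast
    qed
  qed
  then show "z \<in> K" using c unfolding lc_def by simp
qed

lemma mm_Tset:
  assumes R: "subring R" and m: "ideal_of R m" and g: "gen R (set ys) = m" and a: "a \<in> m" and b: "b \<in> m"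
  shows "a * b \<in> Tset R m ys r"
proof -
  have "b \<in> {lc a ys | a. \<forall>l<length ys. a l \<in> R}" using b g gen_list[OF R, of ys] by simp
  then obtain d where d: "b = lc d ys" "\<forall>l<length ys. d l \<in> R" by blast
  have ms: "submod R m" and mR: "m \<subseteq> R" using m unfolding ideal_of_def by blast+
  have am: "a * d l \<in> m" if "l < length ys" for l
  proof -
    have "d l * a \<in> m" using ms d(2) that a unfolding submod_def by blast
    then show ?thesis by (simp add: mult.commute)
  qed
  have aR: "a * d l \<in> R" if "l < length ys" for l using am[OF that] mR by blast
  define c where "c = (\<lambda>l. if l < length ys then a * d l else 0)"
  have m0: "0 \<in> m" using ms unfolding submod_def by blast
  have c1: "\<forall>l<length ys. c l \<in> R" unfolding c_def using aR by simp
  have c2: "\<forall>l<r. c l \<in> m" unfolding c_def using am m0 by simp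
  have "lc c ys = lc (\<lambda>l. a * d l) ys" unfolding lc_def c_def by (rule sum.cong) simp_all
  moreover have "lc c ys \<in> Tset R m ys r" unfolding Tset_def using c1 c2 by blast
  ultimately have "lc (\<lambda>l. a * d l) ys \<in> Tset R m ys r" by simp
  then show ?thesis unfolding d(1) lc_scale .
qed



theorem lemma2p2:
  fixes R m \<omega> I :: "'a::comm_ring_1 set"
  assumes "total_ring_of_fractions R"
    and "cohen_macaulay_local R m"
    and "krull_dim_one R"
    and "canonical_ideal R \<omega>"
    and "R \<subseteq> \<omega>" and "\<omega> \<subseteq> int_closure R"
    and "ideal_prod R m m \<subseteq> colon R \<omega>"
    and "ideal_of (colon m m) I"
    and "I \<subseteq> jacobson (colon m m)"
  shows "(\<forall>xs r. min_gens R m xs \<and> r \<le> length xs \<and>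
            colon R \<omega> = ideal_sum R
              (ideal_prod R (gen R (set (take r xs))) (gen R (set (take r xs))))
              (gen R (set (drop r xs)))
          \<longrightarrow> \<not> (\<exists>x\<in>I. \<exists>i<r. \<exists>j<r. xs ! j = x * xs ! i))
         \<longleftrightarrow> I \<subseteq> colon (colon R \<omega>) m"
proof -
  define K where "K = colon R \<omega>"
  define B where "B = colon m m"
  have R: "subring R" using assms(1) unfolding total_ring_of_fractions_def by blast
  have noeth: "noetherian R" and L: "local_ring R m" using assms(2) unfolding cohen_macaulay_local_def by blast+
  have mmax: "maximal_ideal R m" using L unfolding local_ring_def by blast
  have m: "ideal_of R m" using mmax unfolding maximal_ideal_def by blast
  have mR: "m \<subseteq> R" and ms: "submod R m" using m unfolding ideal_of_def by blast+
  have one_m: "1 \<notin> m" using one_notin[OF R mmax] .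
  have Rclos: "\<And>a b. a \<in> R \<Longrightarrow> b \<in> R \<Longrightarrow> a * b \<in> R \<and> a + b \<in> R \<and> - a \<in> R" "1 \<in> R"
    using R unfolding subring_def by blast+
  have om1: "1 \<in> \<omega>" using assms(5) Rclos(2) by blast
  have KR: "K \<subseteq> R" unfolding K_def colon_def using om1 by force
  have Ks: "submod R K" unfolding submod_def
  proof (intro conjI ballI)
    show "0 \<in> K" unfolding K_def colon_def using subring_0[OF R] by simp
  next
    fix p q assume "p \<in> K" "q \<in> K"
    then have "\<forall>y\<in>\<omega>. p * y \<in> R" "\<forall>y\<in>\<omega>. q * y \<in> R" unfolding K_def colon_def by blast+
    then have "\<forall>y\<in>\<omega>. (p + q) * y \<in> R" using Rclos(1) by (simp add: distrib_right)
    then show "p + q \<in> K" unfolding K_def colon_def by blast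
  next
    fix r p assume "r \<in> R" "p \<in> K"
    then have "\<forall>y\<in>\<omega>. p * y \<in> R" unfolding K_def colon_def by blast
    then have "\<forall>y\<in>\<omega>. (r * p) * y \<in> R" using Rclos(1) \<open>r \<in> R\<close> by (simp add: mult.assoc)
    then show "r * p \<in> K" unfolding K_def colon_def by blast
  qed
  have Kid: "ideal_of R K" using KR Ks unfolding ideal_of_def by blast
  have m2: "a * b \<in> K" if "a \<in> m" "b \<in> m" for a b
    using assms(7) gen_sub[of "{a * b |a b. a \<in> m \<and> b \<in> m}" R] that
    unfolding K_def ideal_prod_def by blast
  have mem_m: "a * b \<in> m" if "a \<in> R" "b \<in> m" for a b using ms that unfolding submod_def by blast
  have IB: "I \<subseteq> B" using assms(8) unfolding B_def ideal_of_def by blast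
  have Bm: "b * y \<in> m" if "b \<in> B" "y \<in> m" for b y using that unfolding B_def colon_def by blast
  have RB: "R \<subseteq> B" unfolding B_def colon_def using mem_m by blast
  have Bsub: "subring B" unfolding subring_def
  proof (intro conjI ballI)
    show "1 \<in> B" unfolding B_def colon_def by simp
  next
    fix p q assume p: "p \<in> B" and q: "q \<in> B"
    show "p + q \<in> B" unfolding B_def colon_def
    proof (rule CollectI, rule ballI)
      fix y assume y: "y \<in> m"
      have "p * y \<in> m" "q * y \<in> m" using Bm p q y by blast+
      then show "(p + q) * y \<in> m" using ms unfolding submod_def by (simp add: distrib_right)
    qed
    show "p * q \<in> B" unfolding B_def colon_def
    proof (rule CollectI, rule ballI)
      fix y assume y: "y \<in> m"
      have "q * y \<in> m" using Bm q y by blast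
      then have "p * (q * y) \<in> m" using Bm p by blast
      then show "(p * q) * y \<in> m" by (simp add: mult.assoc)
    qed
    show "- p \<in> B" unfolding B_def colon_def
    proof (rule CollectI, rule ballI)
      fix y assume y: "y \<in> m"
      have "p * y \<in> m" using Bm p y by blast
      then have "(-1) * (p * y) \<in> m" using mem_m subring_m1[OF R] by blast
      then show "(- p) * y \<in> m" by simp
    qed
  qed
  have Ijac: "x \<in> M" if "x \<in> I" "maximal_ideal B M" for x M
    using that assms(9) unfolding jacobson_def B_def by blast
  have unitR: "\<exists>u\<in>R. a * u = 1" if "a \<in> R" "a \<notin> m" for a using local_unit[OF R L that] .
  show ?thesis unfolding K_def[symmetric]
  proof
    assume H1: "\<forall>xs r. min_gens R m xs \<and> r \<le> length xs \<and>
            K = ideal_sum R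
              (ideal_prod R (gen R (set (take r xs))) (gen R (set (take r xs))))
              (gen R (set (drop r xs)))
          \<longrightarrow> \<not> (\<exists>x\<in>I. \<exists>i<r. \<exists>j<r. xs ! j = x * xs ! i)"
    show "I \<subseteq> colon K m"
    proof (rule subsetI, unfold colon_def, rule CollectI, rule ballI, rule ccontr)
      fix x y assume xI: "x \<in> I" and ym: "y \<in> m" and xyK: "x * y \<notin> K"
      have xB: "x \<in> B" using xI IB by blast
      have KneR: "K \<noteq> R"
      proof
        assume "K = R"
        then show False using xyK Bm[OF xB ym] mR by blast
      qed
      have Km: "K \<subseteq> m"
      proof
        fix k assume kK: "k \<in> K"
        show "k \<in> m"
        proof (rule ccontr)
          assume "k \<notin> m"
          then obtain u where u: "u \<in> R" "k * u = 1" using unitR kK KR by blast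
          then have "1 \<in> K" using Ks kK unfolding submod_def by (metis mult.commute)
          then show False using ideal_has_unit[OF R Kid] KneR by blast
        qed
      qed
      have Kom: "k * w \<in> m" if kK: "k \<in> K" and w: "w \<in> \<omega>" for k w
      proof (rule ccontr)
        assume nm: "k * w \<notin> m"
        have kwR: "k * w \<in> R" using kK w unfolding K_def colon_def by blast
        obtain e where e: "e \<in> R" "k * w * e = 1" using unitR[OF kwR nm] by blast
        define t where "t = k * e"
        have tR: "t \<in> R" unfolding t_def using kK KR e Rclos by blast
        have wt: "w * t = 1" using e unfolding t_def by (simp add: algebra_simps)
        show False
        proof (cases "t \<in> m")
          case False
          obtain t' where t': "t' \<in> R" "t * t' = 1" using unitR[OF tR False] by blast
          have "w = t'" using wt t' by (metis mult.assoc mult.commute mult_1_left)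
          have "\<omega> \<subseteq> R"
          proof
            fix w' assume w': "w' \<in> \<omega>"
            have "k * w' \<in> R" using kK w' unfolding K_def colon_def by blast
            then have "w * (k * w' * e) \<in> R" using \<open>w = t'\<close> t' e Rclos by blast
            moreover have "w * (k * w' * e) = w'"
            proof -
              have "w * (k * w' * e) = w' * (k * w * e)" by (simp add: algebra_simps)
              then show ?thesis using e(2) by simp
            qed
            ultimately show "w' \<in> R" by simp
          qed
          then have "1 \<in> K" unfolding K_def colon_def by auto
          then show False using ideal_has_unit[OF R Kid] KneR by blast
        next
          case True
          have "w \<in> int_closure R" using w assms(6) by blast
          then obtain p where p: "set p \<subseteq> R" "w ^ length p + (\<Sum>i<length p. p ! i * w ^ i) = 0"
            unfolding int_closure_def integral_over_def by blast
          define n where "n = length p"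
          have tw: "t ^ n * w ^ i = t ^ (n - i)" if "i \<le> n" for i
          proof -
            have tn: "t ^ n = t ^ (n - i) * t ^ i" using that by (simp add: power_add[symmetric])
            have "t ^ n * w ^ i = t ^ (n - i) * (t * w) ^ i"
              unfolding tn power_mult_distrib by (simp add: mult.assoc)
            then show ?thesis using wt by (simp add: mult.commute)
          qed
          have "0 = t ^ n * (w ^ n + (\<Sum>i<n. p ! i * w ^ i))" using p unfolding n_def by simp
          also have "\<dots> = t ^ n * w ^ n + (\<Sum>i<n. p ! i * (t ^ n * w ^ i))"
            by (simp add: distrib_left sum_distrib_left algebra_simps)
          also have "\<dots> = 1 + (\<Sum>i<n. p ! i * t ^ (n - i))"
            using tw by (simp add: tw[of n])
          finally have eq0: "1 + (\<Sum>i<n. p ! i * t ^ (n - i)) = 0" by simp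
          have tpow: "t ^ k \<in> R" for k by (induction k) (use Rclos tR in auto)
          have "(\<Sum>i<n. p ! i * t ^ (n - i)) \<in> m"
          proof (rule submod_sum[OF ms])
            fix i assume "i \<in> {..<n}"
            then have i: "i < n" by simp
            have "t ^ (n - i) = t * t ^ (n - i - 1)" using i by (metis Suc_diff_Suc power_Suc diff_Suc_1 Suc_diff_1 zero_less_diff)
            moreover have "t * t ^ (n - i - 1) \<in> m" using mem_m[OF tpow True] by (simp add: mult.commute)
            moreover have "p ! i \<in> R" using p i unfolding n_def by auto
            ultimately show "p ! i * t ^ (n - i) \<in> m" using mem_m by simp
          qed
          then have "(-1) * (\<Sum>i<n. p ! i * t ^ (n - i)) \<in> m" using mem_m subring_m1[OF R] by blast
          then have "1 \<in> m" using eq0 by (metis add.commute add_eq_0_iff mult_minus1)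
          then show False using one_m by blast
        qed
      qed
      have BK: "b * k \<in> K" if "b \<in> B" "k \<in> K" for b k
        unfolding K_def colon_def
      proof (rule CollectI, rule ballI)
        fix w assume "w \<in> \<omega>"
        then have "b * (k * w) \<in> m" using Bm[OF that(1) Kom[OF that(2)]] by blast
        then show "b * k * w \<in> R" using mR by (simp add: mult.assoc subsetD)
      qed
      obtain F where F: "finite F" "F \<subseteq> m" "gen R F = m" using noeth m unfolding noetherian_def by blast
      obtain xs0 where xs0: "set xs0 = F" using finite_list[OF F(1)] by blast
      define P where "P = (\<lambda>n. \<exists>ys. set ys \<subseteq> m \<and> gen R (set ys) = m \<and> length ys = n)"
      have P0: "P (length xs0)" unfolding P_def using xs0 F by blast
      obtain xs1 where xs1: "set xs1 \<subseteq> m" "gen R (set xs1) = m" "length xs1 = (LEAST n. P n)"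
        using LeastI[of P, OF P0] unfolding P_def by blast
      have mg1: "min_gens R m xs1" unfolding min_gens_def
        using xs1 Least_le[of P] unfolding P_def by (metis (mono_tags, lifting))
      define Q where "Q = (\<lambda>r. \<exists>xs. min_gens R m xs \<and> r \<le> length xs \<and> set (drop r xs) \<subseteq> K)"
      have Q0: "Q (length xs1)" unfolding Q_def using mg1 by auto
      define r0 where "r0 = (LEAST r. Q r)"
      obtain xs where xs: "min_gens R m xs" "r0 \<le> length xs" "set (drop r0 xs) \<subseteq> K"
        using LeastI[of Q, OF Q0] unfolding Q_def r0_def by blast
      have g: "gen R (set xs) = m" and xsm: "set xs \<subseteq> m" using xs unfolding min_gens_def by blast+
      have notK: "ys ! i \<notin> K" if ys: "min_gens R m ys" "r0 \<le> length ys" "set (drop r0 ys) \<subseteq> K"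
        and i: "i < r0" for ys i
      proof
        assume yiK: "ys ! i \<in> K"
        define zs where "zs = ys[i := ys ! (r0 - 1), r0 - 1 := ys ! i]"
        have r1: "r0 - 1 < length ys" using i ys by simp
        have il: "i < length ys" using i ys by simp
        have szs: "set zs = set ys" "length zs = length ys" unfolding zs_def using r1 il by auto
        have mz: "min_gens R m zs" using ys(1) szs unfolding min_gens_def by simp
        have "drop (r0 - 1) zs = zs ! (r0 - 1) # drop (Suc (r0 - 1)) zs"
          using Cons_nth_drop_Suc[of "r0 - 1" zs] r1 szs by simp
        moreover have "zs ! (r0 - 1) = ys ! i" unfolding zs_def using r1 by simp
        moreover have "drop (Suc (r0 - 1)) zs = drop r0 ys" unfolding zs_def using i
          by (simp add: drop_update_cancel)
        ultimately have "set (drop (r0 - 1) zs) \<subseteq> K" using ys(3) yiK by simp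
        then have "Q (r0 - 1)" unfolding Q_def using mz szs r1 by (intro exI[of _ zs]) auto
        then have "r0 \<le> r0 - 1" unfolding r0_def by (rule Least_le)
        then show False using i by simp
      qed
      have Kcoef: "\<exists>a. k = lc a xs \<and> (\<forall>l<length xs. a l \<in> R) \<and> (\<forall>l<r0. a l \<in> m)" if kK: "k \<in> K" for k
      proof -
        have "k \<in> m" using kK Km by blast
        then obtain a where a: "k = lc a xs" "\<forall>l<length xs. a l \<in> R" using g gen_list[OF R, of xs] by blast
        have "a l \<in> m" if l: "l < r0" for l
        proof (rule ccontr)
          assume "a l \<notin> m"
          have ll: "l < length xs" using l xs by simp
          have "a l \<in> R" using a(2) ll by blast
          then obtain u where u: "u \<in> R" "a l * u = 1" using unitR \<open>a l \<notin> m\<close> by blast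
          define ys where "ys = xs[l := lc a xs]"
          have gy: "gen R (set ys) = m" unfolding ys_def
            by (rule exchange[OF R m g ll]) (use a u in auto)
          have "set ys \<subseteq> m" using gen_sub[of "set ys" R] gy by simp
          then have my: "min_gens R m ys" using gy xs unfolding min_gens_def ys_def by simp
          have "drop r0 ys = drop r0 xs" unfolding ys_def using l by (simp add: drop_update_cancel)
          then have "ys ! l \<notin> K" using notK[OF my _ _ l] xs unfolding ys_def by simp
          then show False using kK a ll unfolding ys_def by simp
        qed
        then show ?thesis using a by blast
      qed
      have KT: "K = Tset R m ys r0" if gy: "gen R (set ys) = m" and dy: "drop r0 ys = drop r0 xs" for ys
      proof
        show "Tset R m ys r0 \<subseteq> K"
          by (rule Tset_sub_K[OF R m Ks m2]) (use dy xs(3) gen_sub[of "set ys" R] gy in auto)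
        show "K \<subseteq> Tset R m ys r0"
        proof
          fix k assume "k \<in> K"
          then obtain a where a: "k = lc a xs" "\<forall>l<length xs. a l \<in> R" "\<forall>l<r0. a l \<in> m" using Kcoef by blast
          have "(\<Sum>l<length xs. a l * xs ! l) \<in> Tset R m ys r0"
          proof (rule submod_sum[OF Tset_submod[OF R m]])
            fix l assume "l \<in> {..<length xs}"
            then have l: "l < length xs" by simp
            show "a l * xs ! l \<in> Tset R m ys r0"
            proof (cases "l < r0")
              case True
              then show ?thesis using mm_Tset[OF R m gy] a(3) True nth_mem[OF l] xsm by blast
            next
              case False
              have lr: "r0 \<le> l" using False by simp
              have "length (drop r0 ys) = length (drop r0 xs)" using dy by simp
              then have ly: "l < length ys" using l lr by simp
              have "drop r0 ys ! (l - r0) = drop r0 xs ! (l - r0)" using dy by simp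
              then have "xs ! l = ys ! l" using lr l ly by simp
              moreover note ly
              ultimately show ?thesis using Tset_unit[OF R m ly, of "a l" r0] a(2) l False by simp
            qed
          qed
          then show "k \<in> Tset R m ys r0" using a unfolding lc_def by simp
        qed
      qed
      have KTx: "K = Tset R m xs r0" using KT[OF g] by simp
      have "\<exists>i<r0. x * xs ! i \<notin> K"
      proof (rule ccontr)
        assume "\<not> (\<exists>i<r0. x * xs ! i \<notin> K)"
        then have allK: "\<forall>i<r0. x * xs ! i \<in> K" by blast
        have "m \<subseteq> {z. x * z \<in> K}" unfolding g[symmetric]
        proof (rule gen_least)
          show "submod R {z. x * z \<in> K}" using Ks unfolding submod_def by (auto simp: distrib_left mult.left_commute)
          show "set xs \<subseteq> {z. x * z \<in> K}"
          proof
            fix z assume "z \<in> set xs"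
            then obtain p where p: "p < length xs" "z = xs ! p" by (auto simp: in_set_conv_nth)
            show "z \<in> {z. x * z \<in> K}"
            proof (cases "p < r0")
              case True then show ?thesis using allK p by simp
            next
              case False
              then have "xs ! p \<in> set (drop r0 xs)" using set_drop_nth[of r0 p xs] p by simp
              then have "xs ! p \<in> K" using xs(3) by blast
              then show ?thesis using BK[OF xB] p by simp
            qed
          qed
        qed
        then show False using ym xyK by blast
      qed
      then obtain i where i: "i < r0" "x * xs ! i \<notin> K" by blast
      have il: "i < length xs" using i xs(2) by simp
      have vm: "x * xs ! i \<in> m" using Bm[OF xB] nth_mem[OF il] xsm by blast
      have "x * xs ! i \<in> {lc a xs | a. \<forall>l<length xs. a l \<in> R}" using vm g gen_list[OF R, of xs] by simp
      then obtain a where a: "x * xs ! i = lc a xs" "\<forall>l<length xs. a l \<in> R" by blast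
      have m0: "0 \<in> m" using ms unfolding submod_def by blast
      show False
      proof (cases "\<exists>l<r0. l \<noteq> i \<and> a l \<notin> m")
        case True
        then obtain l where l: "l < r0" "l \<noteq> i" "a l \<notin> m" by blast
        have ll: "l < length xs" using l xs(2) by simp
        obtain u where u: "u \<in> R" "a l * u = 1" using unitR[of "a l"] a ll l by blast
        define ys where "ys = xs[l := lc a xs]"
        have gy: "gen R (set ys) = m" unfolding ys_def by (rule exchange[OF R m g ll]) (use a u in auto)
        have "set ys \<subseteq> m" using gen_sub[of "set ys" R] gy by simp
        then have my: "min_gens R m ys" using gy xs(1) unfolding min_gens_def ys_def by simp
        have dy: "drop r0 ys = drop r0 xs" unfolding ys_def using l by (simp add: drop_update_cancel)
        have "K = ideal_sum R (ideal_prod R (gen R (set (take r0 ys))) (gen R (set (take r0 ys)))) (gen R (set (drop r0 ys)))"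
          using KT[OF gy dy] T_eq[OF R m gy, of r0] by simp
        moreover have "r0 \<le> length ys" using xs(2) unfolding ys_def by simp
        moreover have "ys ! l = x * ys ! i" unfolding ys_def using ll l(2) a(1) by simp
        ultimately show False using H1 my xI i(1) l(1) by blast
      next
        case False
        then have am: "\<forall>l<r0. l \<noteq> i \<longrightarrow> a l \<in> m" by blast
        have c1: "\<forall>l<length xs. (a(i := 0)) l \<in> R" using a(2) subring_0[OF R] by simp
        have c2: "\<forall>l<r0. (a(i := 0)) l \<in> m" using am m0 by simp
        have sK: "lc (a(i := 0)) xs \<in> K" unfolding KTx Tset_def using c1 c2 by blast
        have aim: "a i \<notin> m"
        proof
          assume "a i \<in> m"
          then have "\<forall>l<r0. a l \<in> m" using am by blast
          then have "lc a xs \<in> K" unfolding KTx Tset_def using a(2) by blast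
          then show False using a(1) i(2) by simp
        qed
        obtain u where u: "u \<in> R" "a i * u = 1" using unitR[of "a i"] a il aim by blast
        have aiB: "a i \<in> B" using a(2) il RB by blast
        have uB: "u \<in> B" using u RB by blast
        have Bc: "\<And>p q. p \<in> B \<Longrightarrow> q \<in> B \<Longrightarrow> p * q \<in> B \<and> p + q \<in> B \<and> - p \<in> B"
          using Bsub unfolding subring_def by blast
        have xaB: "x - a i \<in> B" using Bc[OF xB Bc[OF aiB aiB, THEN conjunct2, THEN conjunct2]] by simp
        have "\<exists>u'\<in>B. (x - a i) * u' = 1"
        proof (rule ccontr)
          assume nu: "\<not> (\<exists>u'\<in>B. (x - a i) * u' = 1)"
          obtain M where M: "maximal_ideal B M" "x - a i \<in> M" using exists_max[OF Bsub xaB] nu by blast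
          have xM: "x \<in> M" using Ijac[OF xI M(1)] .
          have Mid: "ideal_of B M" using M(1) unfolding maximal_ideal_def by blast
          then have Ms: "submod B M" unfolding ideal_of_def by blast
          have "x - (x - a i) \<in> M" by (rule submod_diff[OF Bsub Ms xM M(2)])
          then have "a i \<in> M" by simp
          then have "u * a i \<in> M" using Ms uB unfolding submod_def by blast
          then have "1 \<in> M" using u(2) by (simp add: mult.commute)
          then have "M = B" by (rule ideal_has_unit[OF Bsub Mid])
          then show False using M(1) unfolding maximal_ideal_def by blast
        qed
        then obtain u' where u': "u' \<in> B" "(x - a i) * u' = 1" by blast
        have "(x - a i) * xs ! i = lc (a(i := 0)) xs"
          using a(1) lc_split[OF il, of a] by (simp add: algebra_simps)
        then have "(x - a i) * xs ! i \<in> K" using sK by simp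
        then have "u' * ((x - a i) * xs ! i) \<in> K" using BK[OF u'(1)] by blast
        moreover have "u' * ((x - a i) * xs ! i) = xs ! i"
        proof -
          have "u' * ((x - a i) * xs ! i) = ((x - a i) * u') * xs ! i" by (metis mult.assoc mult.commute)
          then show ?thesis using u'(2) by simp
        qed
        ultimately have "xs ! i \<in> K" by simp
        then show False using notK[OF xs(1) xs(2) xs(3) i(1)] by blast
      qed
    qed
  next
    assume H2: "I \<subseteq> colon K m"
    show "\<forall>xs r. min_gens R m xs \<and> r \<le> length xs \<and>
            K = ideal_sum R
              (ideal_prod R (gen R (set (take r xs))) (gen R (set (take r xs))))
              (gen R (set (drop r xs)))
          \<longrightarrow> \<not> (\<exists>x\<in>I. \<exists>i<r. \<exists>j<r. xs ! j = x * xs ! i)"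
    proof (intro allI impI notI)
      fix xs r
      assume A: "min_gens R m xs \<and> r \<le> length xs \<and>
            K = ideal_sum R
              (ideal_prod R (gen R (set (take r xs))) (gen R (set (take r xs))))
              (gen R (set (drop r xs)))"
        and "\<exists>x\<in>I. \<exists>i<r. \<exists>j<r. xs ! j = x * xs ! i"
      then obtain x i j where x: "x \<in> I" "i < r" "j < r" "xs ! j = x * xs ! i" by blast
      have g: "gen R (set xs) = m" and xsm: "set xs \<subseteq> m" using A unfolding min_gens_def by blast+
      have KT: "K = Tset R m xs r" using A T_eq[OF R m g] by simp
      have ilen: "i < length xs" and jlen: "j < length xs" using A x by auto
      have "xs ! i \<in> m" using nth_mem[OF ilen] xsm by blast
      moreover have "\<forall>y\<in>m. x * y \<in> K" using x(1) H2 unfolding colon_def by blast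
      ultimately have "x * xs ! i \<in> K" by blast
      then have "xs ! j \<in> K" using x(4) by simp
      then obtain c where c: "xs ! j = lc c xs" "\<forall>l<length xs. c l \<in> R" "\<forall>l<r. c l \<in> m"
        unfolding KT Tset_def by blast
      define s where "s = lc (c(j := 0)) xs"
      have "xs ! j = c j * xs ! j + s" using c(1) lc_split[OF jlen, of c] unfolding s_def by simp
      then have eq1: "(1 - c j) * xs ! j = s" by (simp add: algebra_simps)
      have cjm: "c j \<in> m" using c x by blast
      have "1 - c j \<in> R" using Rclos cjm mR by (metis diff_conv_add_uminus subsetD)
      moreover have "1 - c j \<notin> m"
      proof
        assume "1 - c j \<in> m"
        then have "(1 - c j) + c j \<in> m" using ms cjm unfolding submod_def by blast
        then show False using one_m by simp
      qed
      ultimately obtain u where u: "u \<in> R" "(1 - c j) * u = 1" using unitR by blast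
      have xj: "xs ! j = lc (\<lambda>l. u * (c(j := 0)) l) xs"
      proof -
        have "u * ((1 - c j) * xs ! j) = ((1 - c j) * u) * xs ! j" by (metis mult.assoc mult.commute)
        then have "u * ((1 - c j) * xs ! j) = xs ! j" using u(2) by simp
        then show ?thesis unfolding lc_scale s_def[symmetric] eq1[symmetric] by simp
      qed
      define ys where "ys = take j xs @ drop (Suc j) xs"
      have lys: "length ys = length xs - 1" unfolding ys_def using jlen by simp
      have ysxs: "set ys \<subseteq> set xs" unfolding ys_def using set_take_subset[of j xs] set_drop_subset[of "Suc j" xs] by auto
      have "gen R (set ys) = m"
      proof
        show "gen R (set ys) \<subseteq> m" using gen_least[OF ms] ysxs xsm by blast
        show "m \<subseteq> gen R (set ys)" unfolding g[symmetric]
        proof (rule gen_least[OF submod_gen], rule subsetI)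
          fix y assume "y \<in> set xs"
          then obtain p where p: "p < length xs" "y = xs ! p" by (auto simp: in_set_conv_nth)
          show "y \<in> gen R (set ys)"
          proof (cases "p = j")
            case False
            then show ?thesis using nth_in_remove[OF p(1) False] p gen_sub[of "set ys" R] unfolding ys_def by blast
          next
            case True
            have "(\<Sum>l<length xs. (\<lambda>l. u * (c(j := 0)) l) l * xs ! l) \<in> gen R (set ys)"
            proof (rule submod_sum[OF submod_gen])
              fix l assume l: "l \<in> {..<length xs}"
              show "(\<lambda>l. u * (c(j := 0)) l) l * xs ! l \<in> gen R (set ys)"
              proof (cases "l = j")
                case True
                then show ?thesis using submod_gen[of R "set ys"] unfolding submod_def by simp
              next
                case False
                have "xs ! l \<in> gen R (set ys)" using nth_in_remove[of l xs j] l False gen_sub[of "set ys" R] unfolding ys_def by blast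
                moreover have "u * c l \<in> R" using Rclos u c l by auto
                ultimately show ?thesis using False submod_gen[of R "set ys"] unfolding submod_def by simp
              qed
            qed
            then show ?thesis using xj p True unfolding lc_def by simp
          qed
        qed
      qed
      then have "length xs \<le> length ys" using A ysxs xsm unfolding min_gens_def by blast
      then show False using lys jlen by simp
    qed
  qed
qed

end
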